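(* Let $n\ge 2$, $\rho>0$, and let $F$ be a continuous distribution supported on the non-negative real numbers with a monotone decreasing density $f$. Then the worst-case zero-outage capacity $\underline{R^{0}}(\rho)=\log_2(1-\rho\,\phi_{-}(1))$ equals $0$.
   Context: Let $X\sim F$, $G=F^{-1}$. The function $\phi_{-}$ is defined for the distribution of $-X$, which has the increasing density $x\mapsto f(-x)$ and quantile function $G_{-}(x)=-G(1-x)$: for $a\in[0,1]$ let $H^{-}_a(x)=G_{-}(a+x)+(n-1)G_{-}(1-(n-1)x)$, $c^{-}_n(a)=\min\{c\in[0,\tfrac{1-a}{n}]: \int_c^{(1-a)/n}H^{-}_a(t)\,dt\le(\tfrac{1-a}{n}-c)H^{-}_a(c)\}$, and $\phi_{-}(a)=H^{-}_a(0)=-(G(1-a)+(n-1)G(0))$ if $c^{-}_n(a)>0$, $\phi_{-}(a)=n\,\mathbb{E}[-X\mid -X>G_{-}(a)]=-n\,\mathbb{E}[X\mid X<G(1-a)]$ if $c^{-}_n(a)=0$. The quantity $\log_2(1-\rho\phi_{-}(1-\varepsilon))$ is the smallest $\varepsilon$-outage capacity $\sup\{R\ge0:\Pr(\sum_{i=1}^n|h_i|^2<(2^R-1)/\rho)<\varepsilon\}$ over joint distributions of $(|h_1|^2,\dots,|h_n|^2)$ with each $|h_i|^2\sim F$; zero outage is $\varepsilon=0$. *)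

theory Defs
  imports "HOL-Probability.Probability"
begin

text \<open>A joint distribution of the channel gains (|h_1|^2,...,|h_n|^2) whose marginals all equal
  the distribution F: a probability measure on the product space R^{0..n-1}
  (indices 0..n-1) with every coordinate projection distributed as F.\<close>
definition joint_with_marginals :: "nat \<Rightarrow> real measure \<Rightarrow> (nat \<Rightarrow> real) measure \<Rightarrow> bool" where
  "joint_with_marginals n F P \<longleftrightarrow>
     sets P = sets (PiM {..<n} (\<lambda>_. borel)) \<and> prob_space P \<and>
     (\<forall>i<n. distr P borel (\<lambda>x. x i) = F)"

definition outage_prob :: "nat \<Rightarrow> real \<Rightarrow> (nat \<Rightarrow> real) measure \<Rightarrow> real \<Rightarrow> real" where
  "outage_prob n \<rho> P R = measure P {x \<in> space P. (\<Sum>i<n. x i) < (2 powr R - 1) / \<rho>}"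

definition zero_outage_capacity :: "nat \<Rightarrow> real \<Rightarrow> (nat \<Rightarrow> real) measure \<Rightarrow> real" where
  "zero_outage_capacity n \<rho> P = Sup {R. R \<ge> 0 \<and> outage_prob n \<rho> P R = 0}"

definition worst_zero_outage_capacity :: "nat \<Rightarrow> real \<Rightarrow> real measure \<Rightarrow> real" where
  "worst_zero_outage_capacity n \<rho> F =
     Inf {zero_outage_capacity n \<rho> P | P. joint_with_marginals n F P}"

end

theory Submission
  imports Defs
begin

lemma zoc_nonneg:
  fixes F :: "real measure"
  assumes jw: "joint_with_marginals n F P" and neg: "emeasure F {..<0} = 0" and rho: "\<rho> > 0"
  shows "0 \<le> zero_outage_capacity n \<rho> P"
proof -
  from jw have sP: "sets P = sets (PiM {..<n} (\<lambda>_. borel))" and ps: "prob_space P"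
    and mar: "\<forall>i<n. distr P borel (\<lambda>x. x i) = F" unfolding joint_with_marginals_def by auto
  interpret P: prob_space P by (rule ps)
  have comp: "(\<lambda>x. x i) \<in> borel_measurable P" if "i<n" for i
    using measurable_component_singleton[of i "{..<n}" "\<lambda>_. borel"] that
    by (simp add: measurable_cong_sets[OF sP refl])
  have summ: "(\<lambda>x. \<Sum>i<n. x i) \<in> borel_measurable P" using comp by auto
  define S where "S t = {x \<in> space P. (\<Sum>i<n. x i) < t}" for t :: real
  have Sm: "S t \<in> sets P" for t
  proof -
    have "S t = (\<lambda>x. \<Sum>i<n. x i) -` {..<t} \<inter> space P" by (auto simp: S_def)
    then show ?thesis using measurable_sets[OF summ, of "{..<t}"] by simp
  qed
  have outS: "outage_prob n \<rho> P R = measure P (S ((2 powr R - 1)/\<rho>))" for R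
    by (simp add: outage_prob_def S_def)
  define Z where "Z = {R. R \<ge> 0 \<and> outage_prob n \<rho> P R = 0}"
  have nulli: "(\<lambda>x. x i) -` {..<0} \<inter> space P \<in> null_sets P" if "i<n" for i
  proof -
    have "emeasure P ((\<lambda>x. x i) -` {..<0} \<inter> space P) = emeasure (distr P borel (\<lambda>x. x i)) {..<0}"
      by (rule emeasure_distr[symmetric]) (use comp that in auto)
    also have "\<dots> = 0" using mar that neg by simp
    finally show ?thesis using measurable_sets[OF comp[OF that], of "{..<0}"] by auto
  qed
  have "S 0 \<subseteq> (\<Union>i\<in>{..<n}. (\<lambda>x. x i) -` {..<0} \<inter> space P)"
  proof
    fix x assume "x \<in> S 0"
    then have xs: "x \<in> space P" and s: "(\<Sum>i<n. x i) < 0" by (auto simp: S_def)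
    have "\<exists>i<n. x i < 0"
    proof (rule ccontr)
      assume "\<not> ?thesis"
      then have "0 \<le> (\<Sum>i<n. x i)" by (intro sum_nonneg) auto
      with s show False by simp
    qed
    with xs show "x \<in> (\<Union>i\<in>{..<n}. (\<lambda>x. x i) -` {..<0} \<inter> space P)" by auto
  qed
  moreover have "(\<Union>i\<in>{..<n}. (\<lambda>x. x i) -` {..<0} \<inter> space P) \<in> null_sets P"
    by (rule null_sets.finite_UN) (use nulli in auto)
  ultimately have "S 0 \<in> null_sets P" using Sm null_sets_subset by blast
  then have "measure P (S 0) = 0" by (simp add: measure_def null_setsD1)
  then have Z0: "0 \<in> Z" unfolding Z_def using outS by simp
  have "\<exists>k::nat. measure P (S (real k)) > 0"
  proof (rule ccontr)
    assume "\<not> ?thesis"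
    then have "\<And>k::nat. measure P (S (real k)) = 0" by (meson measure_nonneg not_less order_antisym)
    then have "\<And>k::nat. S (real k) \<in> null_sets P" using Sm P.emeasure_eq_measure by auto
    then have "(\<Union>k. S (real k)) \<in> null_sets P" by (rule null_sets_UN)
    moreover have "(\<Union>k. S (real k)) = space P"
    proof safe
      fix x assume "x \<in> space P"
      obtain k :: nat where "(\<Sum>i<n. x i) < real k" using reals_Archimedean2 by blast
      then show "x \<in> (\<Union>k. S (real k))" using \<open>x \<in> space P\<close> by (auto simp: S_def)
    qed (auto simp: S_def)
    ultimately show False using P.emeasure_space_1 null_setsD1 by (metis zero_neq_one)
  qed
  then obtain k :: nat where k: "measure P (S (real k)) > 0" by blast
  have bd: "R \<le> log 2 (\<rho> * k + 1)" if "R \<in> Z" for R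
  proof (rule ccontr)
    assume "\<not> ?thesis"
    then have "log 2 (\<rho> * k + 1) < R" by simp
    then have "2 powr (log 2 (\<rho> * k + 1)) \<le> 2 powr R" by (intro powr_mono) auto
    moreover have "2 powr (log 2 (\<rho> * k + 1)) = \<rho> * k + 1" using rho by (intro powr_log_cancel) (auto intro: add_nonneg_pos)
    ultimately have "\<rho> * k + 1 \<le> 2 powr R" by linarith
    then have "real k \<le> (2 powr R - 1)/\<rho>" using rho by (simp add: field_simps)
    then have "S (real k) \<subseteq> S ((2 powr R - 1)/\<rho>)" by (auto simp: S_def)
    then have "measure P (S (real k)) \<le> measure P (S ((2 powr R - 1)/\<rho>))"
      using Sm by (intro P.finite_measure_mono) auto
    also have "\<dots> = 0" using that outS unfolding Z_def by simp
    finally show False using k by simp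
  qed
  have "0 \<le> Sup Z"
    by (rule cSup_upper[OF Z0]) (use bd in \<open>auto simp: bdd_above_def\<close>)
  then show ?thesis unfolding zero_outage_capacity_def Z_def .
qed


lemma zoc_comonotone:
  fixes F :: "real measure"
  assumes sF: "sets F = sets borel" and pF: "prob_space F" and n: "n \<ge> 1"
    and neg: "emeasure F {..<0} = 0" and pos: "\<And>s. s > 0 \<Longrightarrow> measure F {..<s} > 0"
    and rho: "\<rho> > 0"
  defines "g \<equiv> (\<lambda>y::real. \<lambda>i\<in>{..<n}. y)"
  defines "P \<equiv> distr F (PiM {..<n} (\<lambda>_. borel)) g"
  shows "joint_with_marginals n F P" and "zero_outage_capacity n \<rho> P = 0"
proof -
  interpret F: prob_space F by (rule pF)
  have idm: "(\<lambda>y. y) \<in> F \<rightarrow>\<^sub>M borel" using measurable_ident_sets[OF sF] .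
  have gm: "g \<in> F \<rightarrow>\<^sub>M PiM {..<n} (\<lambda>_. borel)"
    unfolding g_def by (rule measurable_restrict) (use idm in auto)
  have spF: "space F = UNIV" using sets_eq_imp_space_eq[OF sF] by simp
  show jw: "joint_with_marginals n F P"
    unfolding joint_with_marginals_def
  proof (intro conjI allI impI)
    show "sets P = sets (PiM {..<n} (\<lambda>_. borel))" unfolding P_def by simp
    show "prob_space P" unfolding P_def by (rule F.prob_space_distr[OF gm])
    fix i assume i: "i < n"
    have "distr P borel (\<lambda>x. x i) = distr F borel ((\<lambda>x. x i) \<circ> g)"
      unfolding P_def by (rule distr_distr) (use i gm in auto)
    also have "(\<lambda>x. x i) \<circ> g = (\<lambda>y. y)" using i by (auto simp: g_def)
    also have "distr F borel (\<lambda>y. y) = F" by (rule distr_id2) (use sF in simp)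
    finally show "distr P borel (\<lambda>x. x i) = F" .
  qed
  have outF: "outage_prob n \<rho> P R = measure F {y. real n * y < (2 powr R - 1)/\<rho>}" for R
  proof -
    define t where "t = (2 powr R - 1)/\<rho>"
    have spP: "space P = space (PiM {..<n} (\<lambda>_. borel::real measure))" unfolding P_def by simp
    have A: "{x \<in> space P. (\<Sum>i<n. x i) < t} \<in> sets (PiM {..<n} (\<lambda>_. borel::real measure))"
      unfolding spP by measurable
    have "outage_prob n \<rho> P R = measure P {x \<in> space P. (\<Sum>i<n. x i) < t}"
      by (simp add: outage_prob_def t_def)
    also have "\<dots> = measure F (g -` {x \<in> space P. (\<Sum>i<n. x i) < t} \<inter> space F)"
      unfolding P_def by (rule measure_distr[OF gm A[unfolded P_def]])
    also have "g -` {x \<in> space P. (\<Sum>i<n. x i) < t} \<inter> space F = {y. real n * y < t}"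
      by (auto simp: spP spF g_def space_PiM)
    finally show ?thesis by (simp add: t_def)
  qed
  define Z where "Z = {R. R \<ge> 0 \<and> outage_prob n \<rho> P R = 0}"
  have "Z = {0}"
  proof safe
    fix R assume "R \<in> Z"
    then have R0: "R \<ge> 0" and o: "outage_prob n \<rho> P R = 0" by (auto simp: Z_def)
    show "R = 0"
    proof (rule ccontr)
      assume "R \<noteq> 0"
      then have "R > 0" using R0 by simp
      then have "1 < 2 powr R" by simp
      then have t: "(2 powr R - 1)/\<rho> > 0" using rho by simp
      have np: "real n > 0" using n by simp
      have eqset: "{y. real n * y < tt} = {..<tt/real n}" for tt
        using pos_less_divide_eq[OF np] by (auto simp: mult.commute)
      have "outage_prob n \<rho> P R = measure F {..<(2 powr R - 1)/\<rho>/real n}"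
        by (simp only: outF eqset)
      also have "\<dots> > 0" using t np by (intro pos) (rule divide_pos_pos)
      finally show False using o by simp
    qed
  next
    have "{y. real n * y < (2 powr 0 - 1)/\<rho>} = {..<0}"
      using n by (auto simp: zero_less_mult_iff mult_less_0_iff)
    then have "outage_prob n \<rho> P 0 = measure F {..<0}" using outF by simp
    also have "\<dots> = 0" using neg by (simp add: measure_def)
    finally show "0 \<in> Z" by (simp add: Z_def)
  qed
  then show "zero_outage_capacity n \<rho> P = 0"
    unfolding zero_outage_capacity_def Z_def[symmetric] by simp
qed


theorem proposition2:
  fixes n :: nat and \<rho> :: real and f :: "real \<Rightarrow> real"
  assumes "n \<ge> 2" and "\<rho> > 0"
    and "f \<in> borel_measurable borel"
    and "\<And>x. f x \<ge> 0"
    and "\<And>x. x < 0 \<Longrightarrow> f x = 0"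
    and "\<And>x y. 0 \<le> x \<Longrightarrow> x \<le> y \<Longrightarrow> f y \<le> f x"
    and "(\<integral>\<^sup>+ x. ennreal (f x) \<partial>lborel) = 1"
  shows "worst_zero_outage_capacity n \<rho> (density lborel (\<lambda>x. ennreal (f x))) = 0"
proof -
  define F where "F = density lborel (\<lambda>x. ennreal (f x))"
  have fm: "(\<lambda>x. ennreal (f x)) \<in> borel_measurable lborel" using assms(3) by simp
  have sF: "sets F = sets borel" by (simp add: F_def)
  have pF: "prob_space F"
  proof
    show "emeasure F (space F) = 1" unfolding F_def
      using assms(7) by (simp add: emeasure_density[OF fm])
  qed
  interpret F: prob_space F by (rule pF)
  have neg: "emeasure F {..<0} = 0"
  proof -
    have "emeasure F {..<0} = (\<integral>\<^sup>+ x. ennreal (f x) * indicator {..<0} x \<partial>lborel)"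
      unfolding F_def by (simp add: emeasure_density[OF fm])
    also have "\<dots> = (\<integral>\<^sup>+ x. 0 \<partial>(lborel::real measure))"
      by (rule nn_integral_cong) (auto simp: indicator_def assms(5))
    finally show ?thesis by simp
  qed
  have "\<exists>x0>0. f x0 > 0"
  proof (rule ccontr)
    assume nt: "\<not> ?thesis"
    have z: "f x = 0" if "x > 0" for x using nt that assms(4)[of x]
      by (metis order_less_le)
    have "AE x in lborel. ennreal (f x) = 0"
      using AE_lborel_singleton[of 0]
    proof eventually_elim
      case (elim x)
      then show ?case using z assms(5) by (cases "x > 0") auto
    qed
    then have "(\<integral>\<^sup>+ x. ennreal (f x) \<partial>lborel) = (\<integral>\<^sup>+ x. 0 \<partial>(lborel::real measure))"
      by (rule nn_integral_cong_AE)
    with assms(7) show False by simp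
  qed
  then obtain x0 where x0: "x0 > 0" "f x0 > 0" by blast
  have pos: "measure F {..<s} > 0" if s: "s > 0" for s
  proof -
    define a where "a = min s x0"
    have a: "a > 0" "a \<le> x0" "a \<le> s" using s x0 by (auto simp: a_def)
    have "ennreal (f x0) * ennreal a = (\<integral>\<^sup>+ x. ennreal (f x0) * indicator {0..<a} x \<partial>lborel)"
      using a by (simp add: nn_integral_cmult_indicator)
    also have "\<dots> \<le> (\<integral>\<^sup>+ x. ennreal (f x) * indicator {..<s} x \<partial>lborel)"
      by (rule nn_integral_mono) (use a in \<open>auto simp: indicator_def intro!: ennreal_leI assms(6)\<close>)
    also have "\<dots> = emeasure F {..<s}"
      unfolding F_def by (simp add: emeasure_density[OF fm])
    finally have le: "ennreal (f x0) * ennreal a \<le> emeasure F {..<s}" .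
    have "0 < ennreal (f x0) * ennreal a" using a x0 by (simp add: ennreal_mult[symmetric])
    with le have "0 < emeasure F {..<s}" by (meson order_less_le_trans)
    then show ?thesis using F.emeasure_eq_measure by (simp)
  qed
  have n1: "n \<ge> 1" using assms(1) by simp
  define S where "S = {zero_outage_capacity n \<rho> P | P. joint_with_marginals n F P}"
  define g where "g = (\<lambda>y::real. \<lambda>i\<in>{..<n}. y)"
  define P where "P = distr F (PiM {..<n} (\<lambda>_. borel)) g"
  have P1: "joint_with_marginals n F P" and P2: "zero_outage_capacity n \<rho> P = 0"
    using zoc_comonotone[OF sF pF n1 neg pos assms(2)] unfolding P_def g_def by auto
  have "Inf S = 0"
  proof (rule cInf_eq_minimum)
    show "0 \<in> S" using P1 P2 unfolding S_def by force
    fix x assume "x \<in> S"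
    then show "0 \<le> x" unfolding S_def using zoc_nonneg[OF _ neg assms(2)] by auto
  qed
  then show ?thesis unfolding worst_zero_outage_capacity_def S_def F_def .
qed

end
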